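(* Let $J\in\mathbb{R}^{n\times m}$, $h\in\mathbb{R}^n$, $g\in\mathbb{R}^m$, and $f(x)=\sum_{j=1}^m\rho(J_j\cdot x+g_j)+h^Tx$ for $x\in\{-1,1\}^n$. Let $I,S\subseteq[n]$ be disjoint, and fix $x_I\in\{-1,1\}^{|I|}$, $x_S\in\{-1,1\}^{|S|}$. Then, with $X$ uniform on $\{-1,1\}^n$, \[\mathbb{E}\big[\mathbb{1}_{X_I=x_I}e^{f(X)}\,\big|\,X_S=x_S\big]=\sum_{q\in\{-1,1\}^m}e^{g\cdot q}\prod_{i\in S}e^{x_i(J^{(i)}\cdot q+h_i)}\prod_{i\in[n]\setminus S}\cosh(J^{(i)}\cdot q+h_i)\prod_{i\in I}\sigma(2x_i(J^{(i)}\cdot q+h_i)).\]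
   Context: $J_j$ denotes the $j$-th column and $J^{(i)}$ the $i$-th row of $J$; $\rho(t)=\log(e^t+e^{-t})$; $\sigma(t)=1/(1+e^{-t})$. *)

theory Defs
  imports "HOL-Probability.Probability"
begin

definition rho :: "real \<Rightarrow> real" where
  "rho t = ln (exp t + exp (- t))"

definition sigma :: "real \<Rightarrow> real" where
  "sigma t = 1 / (1 + exp (- t))"

definition cube :: "nat \<Rightarrow> (nat \<Rightarrow> real) set" where
  "cube n = {x. (\<forall>i<n. x i \<in> {-1, 1}) \<and> (\<forall>i\<ge>n. x i = 0)}"

definition col_dot :: "nat \<Rightarrow> (nat \<Rightarrow> nat \<Rightarrow> real) \<Rightarrow> nat \<Rightarrow> (nat \<Rightarrow> real) \<Rightarrow> real" where
  "col_dot n J j x = (\<Sum>i<n. J i j * x i)"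

definition row_dot :: "nat \<Rightarrow> (nat \<Rightarrow> nat \<Rightarrow> real) \<Rightarrow> nat \<Rightarrow> (nat \<Rightarrow> real) \<Rightarrow> real" where
  "row_dot m J i q = (\<Sum>j<m. J i j * q j)"

definition rbm_f :: "nat \<Rightarrow> nat \<Rightarrow> (nat \<Rightarrow> nat \<Rightarrow> real) \<Rightarrow> (nat \<Rightarrow> real) \<Rightarrow> (nat \<Rightarrow> real)
    \<Rightarrow> (nat \<Rightarrow> real) \<Rightarrow> real" where
  "rbm_f n m J h g x = (\<Sum>j<m. rho (col_dot n J j x + g j)) + (\<Sum>i<n. h i * x i)"

end

theory Submission
  imports Defs
begin

definition hbox :: "nat \<Rightarrow> (nat \<Rightarrow> real set) \<Rightarrow> (nat \<Rightarrow> real) set" where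
  "hbox n T = {x. (\<forall>i<n. x i \<in> T i) \<and> (\<forall>i\<ge>n. x i = 0)}"

lemma hbox_0: "hbox 0 T = {\<lambda>_. 0}"
  by (auto simp: hbox_def)

lemma hbox_Suc: "hbox (Suc n) T = (\<lambda>(x,t). x(n:=t)) ` (hbox n T \<times> T n)"
proof (intro equalityI subsetI)
  fix y assume y: "y \<in> hbox (Suc n) T"
  have "y = (\<lambda>(x,t). x(n:=t)) (y(n:=0), y n)" by auto
  moreover have "(y(n:=0), y n) \<in> hbox n T \<times> T n" using y by (auto simp: hbox_def)
  ultimately show "y \<in> (\<lambda>(x,t). x(n:=t)) ` (hbox n T \<times> T n)" by blast
qed (auto simp: hbox_def)

lemma hbox_inj: "inj_on (\<lambda>(x,t). x(n:=t)) (hbox n T \<times> T n)"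
proof (rule inj_onI, clarsimp)
  fix x t x' t'
  assume a: "x \<in> hbox n T" "x' \<in> hbox n T" "x(n := t) = x'(n := t')"
  have "t = t'" using fun_cong[OF a(3), of n] by simp
  moreover have "x = x'"
  proof
    fix i show "x i = x' i"
      using fun_cong[OF a(3), of i] a(1,2) by (cases "i = n") (auto simp: hbox_def)
  qed
  ultimately show "x = x' \<and> t = t'" by simp
qed

lemma sum_hbox:
  fixes F :: "nat \<Rightarrow> real \<Rightarrow> real"
  assumes "\<forall>i<n. finite (T i)"
  shows "finite (hbox n T) \<and> (\<Sum>x\<in>hbox n T. \<Prod>i<n. F i (x i)) = (\<Prod>i<n. \<Sum>t\<in>T i. F i t)"
  using assms
proof (induction n)
  case 0
  then show ?case by (simp add: hbox_0)
next
  case (Suc n)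
  then have IH: "finite (hbox n T)" "(\<Sum>x\<in>hbox n T. \<Prod>i<n. F i (x i)) = (\<Prod>i<n. \<Sum>t\<in>T i. F i t)"
    and fin: "finite (T n)" by auto
  have "(\<Sum>y\<in>hbox (Suc n) T. \<Prod>i<Suc n. F i (y i))
      = (\<Sum>p\<in>hbox n T \<times> T n. \<Prod>i<Suc n. F i (((\<lambda>(x,t). x(n:=t)) p) i))"
    unfolding hbox_Suc by (rule sum.reindex[OF hbox_inj, unfolded comp_def])
  also have "\<dots> = (\<Sum>p\<in>hbox n T \<times> T n. (\<Prod>i<n. F i (fst p i)) * F n (snd p))"
    by (intro sum.cong refl) (auto intro!: prod.cong)
  also have "\<dots> = (\<Sum>x\<in>hbox n T. \<Sum>t\<in>T n. (\<Prod>i<n. F i (x i)) * F n t)"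
    by (simp add: sum.cartesian_product case_prod_beta)
  also have "\<dots> = (\<Sum>x\<in>hbox n T. \<Prod>i<n. F i (x i)) * (\<Sum>t\<in>T n. F n t)"
    by (simp only: sum_product)
  finally show ?case using IH fin by (simp add: hbox_Suc)
qed

lemma cube_hbox: "cube n = hbox n (\<lambda>_. {-1,1})"
  by (auto simp: cube_def hbox_def)

lemma finite_cube: "finite (cube n)"
  unfolding cube_hbox using conjunct1[OF sum_hbox[of n "\<lambda>_. {-1,1}" "\<lambda>_ _. 0::real"]] by simp

lemma exp_half: 
  assumes "(x::real) \<in> {-1,1}"
  shows "exp (x * a) / 2 = cosh a * sigma (2 * x * a)"
proof -
  define u where "u = exp a"
  have u: "u > 0" by (simp add: u_def)
  have e: "exp (-a) = 1/u" "exp (2*a) = u*u" "exp (-(2*a)) = 1/(u*u)" "exp (a*2) = u*u" "exp (-(a*2)) = 1/(u*u)"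
    by (simp_all add: u_def exp_minus inverse_eq_divide flip: exp_add)
  have c: "cosh a = (u + 1/u)/2" by (simp add: cosh_def e u_def[symmetric])
  from assms consider "x = -1" | "x = 1" by auto
  then show ?thesis
  proof cases
    case 1
    have "1 + u*u > 0" using u by (simp add: add_pos_pos)
    then show ?thesis using u 1 by (simp add: c sigma_def e field_simps)
  next
    case 2
    have "u * 2 + u * (u * (u * 2)) > 0" using u by (simp add: add_pos_pos)
    then show ?thesis using u 2 by (simp add: c sigma_def e u_def[symmetric] field_simps)
  qed
qed

lemma expf:
  assumes "x \<in> cube n"
  shows "exp (rbm_f n m J h g x) = (\<Sum>q\<in>cube m. exp (\<Sum>j<m. g j * q j)
            * (\<Prod>i<n. exp (x i * (row_dot m J i q + h i))))"
proof -
  define b where "b j = col_dot n J j x + g j" for j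
  have "exp (\<Sum>j<m. rho (b j)) = (\<Prod>j<m. \<Sum>t\<in>{-1,1}. exp (t * b j))"
    by (simp add: exp_sum rho_def add_pos_pos add.commute)
  also have "\<dots> = (\<Sum>q\<in>cube m. \<Prod>j<m. exp (q j * b j))"
    using sum_hbox[of m "\<lambda>_. {-1,1}" "\<lambda>j t. exp (t * b j)"] by (simp add: cube_hbox)
  finally have 1: "exp (\<Sum>j<m. rho (b j)) = (\<Sum>q\<in>cube m. \<Prod>j<m. exp (q j * b j))" .
  have 2: "(\<Prod>j<m. exp (q j * b j)) * exp (\<Sum>i<n. h i * x i) =
     exp (\<Sum>j<m. g j * q j) * (\<Prod>i<n. exp (x i * (row_dot m J i q + h i)))" for q
  proof -
    have "(\<Sum>j<m. q j * b j) + (\<Sum>i<n. h i * x i) = (\<Sum>j<m. g j * q j) + (\<Sum>i<n. x i * (row_dot m J i q + h i))"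
      unfolding b_def col_dot_def row_dot_def
      by (simp add: algebra_simps sum.distrib sum_distrib_left sum_distrib_right sum.swap[of _ "{..<m}"])
    then have "exp ((\<Sum>j<m. q j * b j) + (\<Sum>i<n. h i * x i)) = exp ((\<Sum>j<m. g j * q j) + (\<Sum>i<n. x i * (row_dot m J i q + h i)))"
      by simp
    then show ?thesis by (simp add: exp_add exp_sum)
  qed
  show ?thesis unfolding rbm_f_def exp_add b_def[symmetric] 1 sum_distrib_right 2 ..
qed

theorem lemma5:
  fixes n m :: nat and J :: "nat \<Rightarrow> nat \<Rightarrow> real" and h :: "nat \<Rightarrow> real" and g :: "nat \<Rightarrow> real"
    and I S :: "nat set" and xI xS :: "nat \<Rightarrow> real"
  assumes "I \<subseteq> {..<n}" and "S \<subseteq> {..<n}" and "I \<inter> S = {}"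
    and "\<forall>i\<in>I. xI i \<in> {-1, 1}" and "\<forall>i\<in>S. xS i \<in> {-1, 1}"
  shows "measure_pmf.expectation
           (cond_pmf (pmf_of_set (cube n)) {X \<in> cube n. \<forall>i\<in>S. X i = xS i})
           (\<lambda>X. indicator {X. \<forall>i\<in>I. X i = xI i} X * exp (rbm_f n m J h g X))
       = (\<Sum>q\<in>cube m. exp (\<Sum>j<m. g j * q j)
            * (\<Prod>i\<in>S. exp (xS i * (row_dot m J i q + h i)))
            * (\<Prod>i\<in>{..<n} - S. cosh (row_dot m J i q + h i))
            * (\<Prod>i\<in>I. sigma (2 * xI i * (row_dot m J i q + h i))))"
proof -
  define a where "a q i = row_dot m J i q + h i" for q i
  define C where "C = {X \<in> cube n. \<forall>i\<in>S. X i = xS i}"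
  define Ind where "Ind = {X::nat\<Rightarrow>real. \<forall>i\<in>I. X i = xI i}"
  define T' where "T' i = (if i \<in> S then {xS i} else {-1,1::real})" for i
  define T where "T i = (if i \<in> S then {xS i} else if i \<in> I then {xI i} else {-1,1::real})" for i
  have finT': "\<forall>i<n. finite (T' i)" and finT: "\<forall>i<n. finite (T i)"
    by (auto simp: T'_def T_def)
  have C_eq: "C = hbox n T'"
    using assms(2,5) unfolding C_def cube_def hbox_def T'_def by (auto; metis)
  have CI_eq: "C \<inter> Ind = hbox n T"
    using assms(1-5) unfolding C_def Ind_def cube_def hbox_def T_def by (auto; metis)
  have finC: "finite C" using sum_hbox[OF finT', of "\<lambda>_ _. 0"] C_eq by simp
  define w where "w i = (if i < n then (if i \<in> S then xS i else 1) else (0::real))" for i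
  have wC: "w \<in> C" using assms(2,5) by (auto simp: C_def cube_def w_def)
  have Cne: "C \<noteq> {}" using wC by auto
  have Csub: "C \<subseteq> cube n" by (auto simp: C_def)
  have cube_ne: "cube n \<noteq> {}" using wC Csub by auto
  have cond: "cond_pmf (pmf_of_set (cube n)) C = pmf_of_set C"
  proof (rule pmf_eqI)
    fix x
    have ne: "set_pmf (pmf_of_set (cube n)) \<inter> C \<noteq> {}"
      using cube_ne finite_cube Csub Cne by auto
    show "pmf (cond_pmf (pmf_of_set (cube n)) C) x = pmf (pmf_of_set C) x"
      using cube_ne finite_cube Csub Cne finC
      by (auto simp add: pmf_cond[OF ne] measure_pmf_of_set Int_absorb1 indicator_def)
  qed
  have cardC: "real (card C) = (\<Prod>i<n. real (card (T' i)))"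
    using sum_hbox[OF finT', of "\<lambda>_ _. 1"] C_eq by simp
  define K where "K q i = (if i \<in> S then exp (xS i * a q i) else if i \<in> I then
     cosh (a q i) * sigma (2 * xI i * a q i) else cosh (a q i))" for q i
  have hsub: "hbox n T \<subseteq> cube n" using CI_eq Csub by auto
  have finhT: "finite (hbox n T)" using sum_hbox[OF finT, of "\<lambda>_ _. 0"] by simp
  have step1: "(\<Sum>X\<in>C. indicator Ind X * exp (rbm_f n m J h g X))
     = (\<Sum>q\<in>cube m. exp (\<Sum>j<m. g j * q j) * (\<Prod>i<n. \<Sum>t\<in>T i. exp (t * a q i)))"
  proof -
    have "(\<Sum>X\<in>C. indicator Ind X * exp (rbm_f n m J h g X)) = (\<Sum>X\<in>C \<inter> Ind. exp (rbm_f n m J h g X))"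
      using finC by (simp add: sum.inter_restrict indicator_def if_distrib cong: if_cong)
    also have "\<dots> = (\<Sum>X\<in>hbox n T. \<Sum>q\<in>cube m. exp (\<Sum>j<m. g j * q j) * (\<Prod>i<n. exp (X i * a q i)))"
      unfolding CI_eq a_def using hsub by (intro sum.cong refl expf) auto
    also have "\<dots> = (\<Sum>q\<in>cube m. exp (\<Sum>j<m. g j * q j) * (\<Sum>X\<in>hbox n T. \<Prod>i<n. exp (X i * a q i)))"
      by (subst sum.swap) (simp add: sum_distrib_left)
    also have "\<dots> = (\<Sum>q\<in>cube m. exp (\<Sum>j<m. g j * q j) * (\<Prod>i<n. \<Sum>t\<in>T i. exp (t * a q i)))"
    proof (intro sum.cong refl arg_cong2[where f="(*)"])
      fix q show "(\<Sum>X\<in>hbox n T. \<Prod>i<n. exp (X i * a q i)) = (\<Prod>i<n. \<Sum>t\<in>T i. exp (t * a q i))"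
        using conjunct2[OF sum_hbox[OF finT, of "\<lambda>i t. exp (t * a q i)"]] by simp
    qed
    finally show ?thesis .
  qed
  have step2: "(\<Prod>i<n. \<Sum>t\<in>T i. exp (t * a q i)) / real (card C) = (\<Prod>i<n. K q i)" for q
  proof -
    have "(\<Prod>i<n. \<Sum>t\<in>T i. exp (t * a q i)) / real (card C)
        = (\<Prod>i<n. (\<Sum>t\<in>T i. exp (t * a q i)) / real (card (T' i)))"
      unfolding cardC by (simp add: prod_dividef)
    also have "\<dots> = (\<Prod>i<n. K q i)"
    proof (intro prod.cong refl)
      fix i assume "i \<in> {..<n}"
      show "(\<Sum>t\<in>T i. exp (t * a q i)) / real (card (T' i)) = K q i"
      proof (cases "i \<in> S")
        case True then show ?thesis by (simp add: T_def T'_def K_def)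
      next
        case nS: False
        show ?thesis
        proof (cases "i \<in> I")
          case True
          then show ?thesis using nS exp_half[of "xI i" "a q i"] assms(4)
            by (simp add: T_def T'_def K_def)
        next
          case False
          then show ?thesis using nS by (simp add: T_def T'_def K_def cosh_def add.commute)
        qed
      qed
    qed
    finally show ?thesis .
  qed
  have step3: "(\<Prod>i<n. K q i) = (\<Prod>i\<in>S. exp (xS i * a q i))
            * (\<Prod>i\<in>{..<n} - S. cosh (a q i))
            * (\<Prod>i\<in>I. sigma (2 * xI i * a q i))" for q
  proof -
    have IS: "I \<subseteq> {..<n} - S" using assms(1,3) by auto
    have "(\<Prod>i<n. K q i) = (\<Prod>i\<in>{..<n} - S. K q i) * (\<Prod>i\<in>S. K q i)"
      using assms(2) by (simp add: prod.subset_diff)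
    also have "(\<Prod>i\<in>S. K q i) = (\<Prod>i\<in>S. exp (xS i * a q i))"
      by (simp add: K_def)
    also have "(\<Prod>i\<in>{..<n} - S. K q i) = (\<Prod>i\<in>{..<n} - S - I. K q i) * (\<Prod>i\<in>I. K q i)"
      using IS by (simp add: prod.subset_diff)
    also have "(\<Prod>i\<in>{..<n} - S - I. K q i) = (\<Prod>i\<in>{..<n} - S - I. cosh (a q i))"
      by (intro prod.cong refl) (auto simp: K_def)
    also have "(\<Prod>i\<in>I. K q i) = (\<Prod>i\<in>I. cosh (a q i)) * (\<Prod>i\<in>I. sigma (2 * xI i * a q i))"
      using assms(3) by (auto simp: K_def prod.distrib[symmetric] intro!: prod.cong)
    also have "(\<Prod>i\<in>{..<n} - S. cosh (a q i)) = (\<Prod>i\<in>{..<n} - S - I. cosh (a q i)) * (\<Prod>i\<in>I. cosh (a q i))"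
      using IS by (simp add: prod.subset_diff)
    ultimately show ?thesis by (simp add: mult_ac)
  qed
  have "measure_pmf.expectation (pmf_of_set C) (\<lambda>X. indicator Ind X * exp (rbm_f n m J h g X))
     = (\<Sum>X\<in>C. indicator Ind X * exp (rbm_f n m J h g X)) / real (card C)"
    by (rule integral_pmf_of_set[OF Cne finC])
  also have "\<dots> = (\<Sum>q\<in>cube m. exp (\<Sum>j<m. g j * q j) * (\<Prod>i<n. K q i))"
    unfolding step1 sum_divide_distrib by (simp add: step2 flip: times_divide_eq_right)
  also have "\<dots> = (\<Sum>q\<in>cube m. exp (\<Sum>j<m. g j * q j) * (\<Prod>i\<in>S. exp (xS i * a q i))
            * (\<Prod>i\<in>{..<n} - S. cosh (a q i))
            * (\<Prod>i\<in>I. sigma (2 * xI i * a q i)))"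
    by (simp add: step3 mult_ac)
  finally show ?thesis unfolding cond C_def[symmetric] Ind_def[symmetric] a_def .
qed
end
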